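(* Assume $p<2q-1$. For every finite word $u$ over $B$ accepted by $\widehat{\mathcal{T}_{p/q}}$, there exists a finite word $v$ over $A_p$ accepted by $\mathcal{T}_{p/q}$ such that $\pi(u)=\pi(v)$ and $|u|=|v|$.
   Context: Let $p>q>1$ be coprime integers, $A_p=\{0,\dots,p-1\}$ and $B=\{p-(2q-1),\dots,p-1\}$. For $n\in\mathbb{N}$ and $a\in\mathbb{Z}$, let $\tau(n,a)=\frac{np+a}{q}$, defined only when $q$ divides $np+a$. Let $\mathcal{T}_{p/q}$ (resp. $\widehat{\mathcal{T}_{p/q}}$) be the deterministic automaton with state set $\mathbb{N}$, alphabet $A_p$ (resp. $B$), initial state $0$, and transitions $n\xrightarrow{a}\tau(n,a)$ for $a$ in the alphabet with $\tau(n,a)$ defined. A finite word is accepted if it labels a path starting at $0$. For a finite word $a_k a_{k-1}\cdots a_0$ of integer digits, $\pi(a_k\cdots a_0)=\sum_{i=0}^{k}\frac{a_i}{q}\left(\frac{p}{q}\right)^i$. $|u|$ denotes the length of $u$. *)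

theory Defs
  imports Complex_Main
begin

definition tau :: "int \<Rightarrow> int \<Rightarrow> nat \<Rightarrow> int \<Rightarrow> nat option" where
  "tau p q n a = (if q dvd (int n * p + a) \<and> int n * p + a \<ge> 0
                  then Some (nat ((int n * p + a) div q)) else None)"

text \<open>Run of the automaton on a word; words are lists whose head is the first letter read
  (the most significant digit a_k of a_k ... a_0).\<close>
fun run :: "int \<Rightarrow> int \<Rightarrow> nat \<Rightarrow> int list \<Rightarrow> nat option" where
  "run p q n [] = Some n"
| "run p q n (a # w) = (case tau p q n a of None \<Rightarrow> None | Some m \<Rightarrow> run p q m w)"

definition accepted :: "int \<Rightarrow> int \<Rightarrow> int set \<Rightarrow> int list \<Rightarrow> bool" where
  "accepted p q Alph w \<longleftrightarrow> set w \<subseteq> Alph \<and> run p q 0 w \<noteq> None"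

definition alphA :: "int \<Rightarrow> int set" where
  "alphA p = {0..p-1}"

definition alphB :: "int \<Rightarrow> int \<Rightarrow> int set" where
  "alphB p q = {p - (2*q - 1)..p-1}"

text \<open>pi(a_k ... a_0) = sum_i a_i/q (p/q)^i; the list element at position j is a_(k-j).\<close>
definition piv :: "int \<Rightarrow> int \<Rightarrow> int list \<Rightarrow> real" where
  "piv p q w = (\<Sum>j<length w. (real_of_int (w ! j) / real_of_int q) *
                   (real_of_int p / real_of_int q) ^ (length w - 1 - j))"

end

theory Submission
  imports Defs
begin

lemma run_snoc: "run p q n (w @ [a]) = (case run p q n w of None \<Rightarrow> None | Some m \<Rightarrow> tau p q m a)"
  by (induction w arbitrary: n) (auto split: option.splits)

lemma tau_SomeD:
  assumes "tau p q n a = Some m" "q > 0"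
  shows "q * int m = int n * p + a"
proof -
  have d: "q dvd (int n * p + a)" "int n * p + a \<ge> 0" and m: "m = nat ((int n * p + a) div q)"
    using assms(1) unfolding tau_def by (auto split: if_splits)
  have "(int n * p + a) div q \<ge> 0" using d(2) assms(2) by (simp add: pos_imp_zdiv_nonneg_iff)
  then have "int m = (int n * p + a) div q" using m by simp
  then show ?thesis using d(1) by simp
qed

lemma tau_SomeI:
  assumes "int n * p + a = q * int m" "q > 0"
  shows "tau p q n a = Some m"
  using assms unfolding tau_def by auto

lemma piv_snoc:
  "piv p q (w @ [a]) = (real_of_int p / real_of_int q) * piv p q w + real_of_int a / real_of_int q"
proof -
  have "piv p q (w @ [a]) = (\<Sum>j<length w. (real_of_int (w ! j) / real_of_int q) *
                   (real_of_int p / real_of_int q) ^ (length w - j))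
          + real_of_int a / real_of_int q"
    unfolding piv_def by (simp add: nth_append)
  also have "(\<Sum>j<length w. (real_of_int (w ! j) / real_of_int q) *
                   (real_of_int p / real_of_int q) ^ (length w - j))
      = (real_of_int p / real_of_int q) * piv p q w"
    unfolding piv_def sum_distrib_left
  proof (rule sum.cong)
    fix j assume "j \<in> {..<length w}"
    then have "length w - j = Suc (length w - 1 - j)" by auto
    then show "(real_of_int (w ! j) / real_of_int q) * (real_of_int p / real_of_int q) ^ (length w - j)
      = (real_of_int p / real_of_int q) * ((real_of_int (w ! j) / real_of_int q) *
                   (real_of_int p / real_of_int q) ^ (length w - 1 - j))"
      by (simp add: algebra_simps)
  qed simp
  finally show ?thesis .
qed

lemma piv_run:
  assumes "run p q 0 v = Some m" "q > 0"
  shows "piv p q v = real m"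
  using assms(1)
proof (induction v arbitrary: m rule: rev_induct)
  case Nil
  then show ?case by (simp add: piv_def)
next
  case (snoc a w)
  from snoc.prems obtain n where n: "run p q 0 w = Some n" and t: "tau p q n a = Some m"
    by (auto simp: run_snoc split: option.splits)
  have "q * int m = int n * p + a" using tau_SomeD[OF t assms(2)] .
  then have "real_of_int q * real m = real n * real_of_int p + real_of_int a"
    by (metis of_int_add of_int_mult of_int_of_nat_eq)
  then have "real m = (real_of_int p / real_of_int q) * real n + real_of_int a / real_of_int q"
    using assms(2) by (simp add: field_simps)
  then show ?case using snoc.IH[OF n] by (simp add: piv_snoc)
qed

definition PA :: "int \<Rightarrow> int \<Rightarrow> nat \<Rightarrow> nat \<Rightarrow> bool" where
  "PA p q k m \<longleftrightarrow> (\<exists>v. length v = k \<and> set v \<subseteq> alphA p \<and> run p q 0 v = Some m)"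

lemma PA_step:
  assumes "PA p q k n" "int n * p + a = q * int m" "0 \<le> a" "a < p" "q > 0"
  shows "PA p q (Suc k) m"
proof -
  obtain v where v: "length v = k" "set v \<subseteq> alphA p" "run p q 0 v = Some n"
    using assms(1) unfolding PA_def by blast
  have "run p q 0 (v @ [a]) = Some m"
    using v(3) tau_SomeI[OF assms(2,5)] by (simp add: run_snoc)
  moreover have "set (v @ [a]) \<subseteq> alphA p" using v(2) assms(3,4) by (auto simp: alphA_def)
  ultimately show ?thesis unfolding PA_def using v(1) by (metis length_append_singleton)
qed

lemma PA_down:
  assumes "PA p q k m" "m' \<le> m" "0 < q" "q < p"
  shows "PA p q k m'"
  using assms(1,2)
proof (induction k arbitrary: m m')
  case 0
  then show ?case by (auto simp: PA_def)
next
  case (Suc k)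
  from Suc.prems(1) obtain v where v: "length v = Suc k" "set v \<subseteq> alphA p" "run p q 0 v = Some m"
    unfolding PA_def by blast
  then obtain w a where wa: "v = w @ [a]" by (metis length_Suc_conv_rev)
  from v(3) wa obtain n where n: "run p q 0 w = Some n" and t: "tau p q n a = Some m"
    by (auto simp: run_snoc split: option.splits)
  have a: "0 \<le> a" "a < p" using v(2) wa by (auto simp: alphA_def)
  have eq: "q * int m = int n * p + a" using tau_SomeD[OF t assms(3)] .
  have PAn: "PA p q k n" unfolding PA_def using v wa n by auto
  define n' where "n' = (q * int m') div p"
  define a' where "a' = (q * int m') mod p"
  have p0: "p > 0" using assms by simp
  have "q * int m' \<le> q * int m" using Suc.prems(2) assms(3) by simp
  also have "\<dots> < (int n + 1) * p" using eq a by (simp add: algebra_simps)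
  finally have lt: "q * int m' < (int n + 1) * p" .
  have "q * int m' = p * n' + a'" unfolding n'_def a'_def by simp
  moreover have "a' \<ge> 0" unfolding a'_def using p0 by simp
  ultimately have "p * n' < p * (int n + 1)" using lt by (simp add: algebra_simps)
  then have "n' < int n + 1" using p0 by simp
  moreover have n'0: "n' \<ge> 0" unfolding n'_def using p0 assms(3) by (simp add: pos_imp_zdiv_nonneg_iff)
  ultimately have "nat n' \<le> n" by simp
  then have "PA p q k (nat n')" using Suc.IH[OF PAn] by blast
  moreover have "int (nat n') * p + a' = q * int m'"
    using n'0 unfolding n'_def a'_def by (simp add: mult.commute)
  moreover have "0 \<le> a'" "a' < p" unfolding a'_def using p0 by auto
  ultimately show ?case using PA_step assms(3) by blast
qed

lemma B_to_A:
  assumes "set u \<subseteq> alphB p q" "run p q 0 u = Some m" "0 < q" "q < p"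
  shows "PA p q (length u) m"
  using assms(1,2)
proof (induction u arbitrary: m rule: rev_induct)
  case Nil
  then show ?case unfolding PA_def by (intro exI[of _ "[]"]) auto
next
  case (snoc b w)
  from snoc.prems(2) obtain n where n: "run p q 0 w = Some n" and t: "tau p q n b = Some m"
    by (auto simp: run_snoc split: option.splits)
  have b: "b < p" using snoc.prems(1) by (auto simp: alphB_def)
  have eq: "q * int m = int n * p + b" using tau_SomeD[OF t assms(3)] .
  have PAn: "PA p q (length w) n" using snoc.IH[OF _ n] snoc.prems(1) by auto
  define n' where "n' = (q * int m) div p"
  define a' where "a' = (q * int m) mod p"
  have p0: "p > 0" using assms by simp
  have "q * int m < (int n + 1) * p" using eq b by (simp add: algebra_simps)
  then have lt: "q * int m < (int n + 1) * p" .
  have "q * int m = p * n' + a'" unfolding n'_def a'_def by simp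
  moreover have "a' \<ge> 0" unfolding a'_def using p0 by simp
  ultimately have "p * n' < p * (int n + 1)" using lt by (simp add: algebra_simps)
  then have "n' < int n + 1" using p0 by simp
  moreover have n'0: "n' \<ge> 0" unfolding n'_def using p0 assms(3) by (simp add: pos_imp_zdiv_nonneg_iff)
  ultimately have "nat n' \<le> n" by simp
  then have "PA p q (length w) (nat n')" using PA_down[OF PAn _ assms(3,4)] by blast
  moreover have "int (nat n') * p + a' = q * int m"
    using n'0 unfolding n'_def a'_def by (simp add: mult.commute)
  moreover have "0 \<le> a'" "a' < p" unfolding a'_def using p0 by auto
  ultimately show ?case using PA_step assms(3) by simp
qed

theorem mainTheorem11:
  fixes p q :: int
  assumes "1 < q" and "q < p" and "coprime p q" and "p < 2*q - 1"
  shows "\<forall>u. accepted p q (alphB p q) u \<longrightarrow>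
           (\<exists>v. accepted p q (alphA p) v \<and> piv p q u = piv p q v \<and> length u = length v)"
proof (intro allI impI)
  fix u assume acc: "accepted p q (alphB p q) u"
  then obtain m where u: "set u \<subseteq> alphB p q" "run p q 0 u = Some m"
    unfolding accepted_def by auto
  have q0: "0 < q" using assms by simp
  obtain v where v: "length v = length u" "set v \<subseteq> alphA p" "run p q 0 v = Some m"
    using B_to_A[OF u q0 assms(2)] unfolding PA_def by blast
  show "\<exists>v. accepted p q (alphA p) v \<and> piv p q u = piv p q v \<and> length u = length v"
    using v piv_run[OF u(2) q0] piv_run[OF v(3) q0] unfolding accepted_def by auto
qed

end
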